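(* Let $c\in\mathbb{Z}^n$ be a point with at least one positive and at least one negative coordinate. Then there exists a basis $\xi_1,\dots,\xi_n$ of the vector space $\mathbb{R}^n$ such that $\xi_i\in\mathbb{Z}^n_{\ge0}$ for $i=1,\dots,n$ and $\langle\xi_i,c\rangle=0$ for $i=1,\dots,n-1$.
   Context: $\langle\cdot,\cdot\rangle$ denotes the standard scalar product. *)

theory Defs
  imports "HOL-Analysis.Analysis"
begin

end

theory Submission
  imports Defs
begin

lemma span_all_axis:
  fixes S :: "(real ^ 'n) set"
  assumes "\<And>j. axis j 1 \<in> span S"
  shows "span S = UNIV"
proof -
  have "Basis \<subseteq> span S" using assms axis_inverse by blast
  then have "span Basis \<subseteq> span S" by (meson span_minimal subspace_span)
  then show ?thesis by (simp add: top_le)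
qed

theorem lemma2p3:
  fixes c :: "real ^ 'n"
  assumes cint: "\<forall>j. c $ j \<in> \<int>"
    and pos: "\<exists>j. c $ j > 0"
    and neg: "\<exists>j. c $ j < 0"
  shows "\<exists>\<xi> :: nat \<Rightarrow> real ^ 'n.
           inj_on \<xi> {1..CARD('n)} \<and>
           independent (\<xi> ` {1..CARD('n)}) \<and>
           span (\<xi> ` {1..CARD('n)}) = UNIV \<and>
           (\<forall>i\<in>{1..CARD('n)}. \<forall>j. \<xi> i $ j \<in> \<int> \<and> \<xi> i $ j \<ge> 0) \<and>
           (\<forall>i\<in>{1..CARD('n) - 1}. \<xi> i \<bullet> c = 0)"
proof -
  obtain p where p: "c $ p > 0" using pos by blast
  obtain q where q: "c $ q < 0" using neg by blast
  have pq: "p \<noteq> q" using p q by auto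
  define a where "a = c $ p"
  define b where "b = - c $ q"
  have a0: "a > 0" and b0: "b > 0" using p q a_def b_def by auto
  have aZ: "a \<in> \<int>" and bZ: "b \<in> \<int>" using cint a_def b_def by auto
  define g :: "'n \<Rightarrow> real ^ 'n" where "g j = (if j = p then axis p 1
     else if j = q then b *\<^sub>R axis p 1 + a *\<^sub>R axis q 1
     else if c $ j \<ge> 0 then c $ j *\<^sub>R axis q 1 + b *\<^sub>R axis j 1
     else (- c $ j) *\<^sub>R axis p 1 + a *\<^sub>R axis j 1)" for j
  have gorth: "g j \<bullet> c = 0" if "j \<noteq> p" for j
    using that pq by (auto simp: g_def inner_axis' inner_add_left a_def b_def algebra_simps)
  have gnn: "g j $ k \<in> \<int> \<and> g j $ k \<ge> 0" for j k
    using a0 b0 aZ bZ cint by (auto simp: g_def axis_def)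
  have gspan: "axis j 1 \<in> span (range g)" for j
  proof -
    have ep: "axis p 1 \<in> span (range g)"
      by (rule span_base) (auto simp: g_def intro!: range_eqI[of _ _ p])
    have gq: "g q \<in> span (range g)" by (simp add: span_base)
    have eq: "axis q 1 \<in> span (range g)"
    proof -
      have "axis q 1 = (1/a) *\<^sub>R (g q - b *\<^sub>R axis p 1)"
        using a0 pq by (simp add: g_def)
      then show ?thesis using ep gq by (metis span_diff span_scale)
    qed
    show ?thesis
    proof (cases "j = p \<or> j = q")
      case True then show ?thesis using ep eq by auto
    next
      case False
      have gj: "g j \<in> span (range g)" by (simp add: span_base)
      show ?thesis
      proof (cases "c $ j \<ge> 0")
        case True
        have "axis j 1 = (1/b) *\<^sub>R (g j - c $ j *\<^sub>R axis q 1)"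
          using b0 False True by (simp add: g_def)
        then show ?thesis using eq gj by (metis span_diff span_scale)
      next
        case F2: False
        have "axis j 1 = (1/a) *\<^sub>R (g j - (- c $ j) *\<^sub>R axis p 1)"
          using a0 False F2 by (simp add: g_def)
        then show ?thesis using ep gj by (metis span_diff span_scale)
      qed
    qed
  qed
  define n where "n = CARD('n)"
  obtain f where f: "bij_betw f {1..n} (UNIV :: 'n set)"
    using ex_bij_betw_nat_finite_1[of "UNIV :: 'n set"] n_def by auto
  have n1: "n \<ge> 1" using n_def by simp
  obtain k where k: "k \<in> {1..n}" "f k = p" using f by (metis bij_betw_iff_bijections UNIV_I)
  define \<xi> where "\<xi> i = (if i = n then g p else if i = k then g (f n) else g (f i))" for i
  have img: "range g \<subseteq> \<xi> ` {1..n}"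
  proof
    fix y assume "y \<in> range g"
    then obtain x where x: "y = g x" by auto
    obtain i where i: "i \<in> {1..n}" "f i = x" using f by (metis bij_betw_iff_bijections UNIV_I)
    show "y \<in> \<xi> ` {1..n}"
    proof (cases "x = p")
      case True then show ?thesis using x n1 by (auto simp: \<xi>_def intro!: image_eqI[of _ _ n])
    next
      case False
      show ?thesis
      proof (cases "i = n")
        case True
        then have "k \<noteq> n" using False i k by auto
        then show ?thesis using x i True k by (auto simp: \<xi>_def intro!: image_eqI[of _ _ k])
      next
        case F2: False
        then have "i \<noteq> k" using False i k by auto
        then show ?thesis using x i F2 by (auto simp: \<xi>_def intro!: image_eqI[of _ _ i])
      qed
    qed
  qed
  have sp: "span (\<xi> ` {1..n}) = UNIV"
    by (rule span_all_axis) (meson gspan img span_mono subsetD)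
  have fin: "finite (\<xi> ` {1..n})" by simp
  have "dim (UNIV :: (real^'n) set) \<le> card (\<xi> ` {1..n})"
    using span_card_ge_dim[OF _ _ fin, of UNIV] sp by auto
  then have cge: "n \<le> card (\<xi> ` {1..n})" by (simp add: n_def)
  have cle: "card (\<xi> ` {1..n}) \<le> n" using card_image_le[of "{1..n}" \<xi>] by simp
  have inj: "inj_on \<xi> {1..n}" using cge cle by (simp add: inj_on_iff_eq_card)
  have ind: "independent (\<xi> ` {1..n})"
    using card_le_dim_spanning[of "\<xi> ` {1..n}" UNIV] sp cle fin by (auto simp: n_def)
  have nn: "\<forall>i\<in>{1..n}. \<forall>j. \<xi> i $ j \<in> \<int> \<and> \<xi> i $ j \<ge> 0"
    using gnn by (simp add: \<xi>_def)
  have orth: "\<forall>i\<in>{1..n - 1}. \<xi> i \<bullet> c = 0"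
  proof
    fix i assume i: "i \<in> {1..n - 1}"
    then have "i \<noteq> n" "i \<in> {1..n}" by auto
    show "\<xi> i \<bullet> c = 0"
    proof (cases "i = k")
      case True
      then have "f n \<noteq> p" using k f \<open>i \<noteq> n\<close> n1
        by (metis atLeastAtMost_iff bij_betw_iff_bijections order_refl)
      then show ?thesis using True \<open>i \<noteq> n\<close> gorth by (simp add: \<xi>_def)
    next
      case False
      then have "f i \<noteq> p" using k f \<open>i \<in> {1..n}\<close>
        by (metis bij_betw_iff_bijections)
      then show ?thesis using False \<open>i \<noteq> n\<close> gorth by (simp add: \<xi>_def)
    qed
  qed
  show ?thesis using inj ind sp nn orth unfolding n_def by blast
qed

end
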